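(* Let $G=(V,E)$ be a finite simple graph and $e\in E$. Let $G-e$ denote the graph obtained from $G$ by removing the edge $e$ (keeping all vertices). Then $$\gamma_{coe}(G)-2\leq \gamma_{coe}(G-e)\leq \gamma_{coe}(G)+2.$$
   Context: All graphs are finite and simple. For a graph $G=(V,E)$ and $v\in V$, $\deg(v)$ is the number of neighbours of $v$. A set $D\subseteq V$ is a dominating set if every vertex of $V\setminus D$ is adjacent to at least one vertex of $D$. A dominating set $D$ is a co-even dominating set if $\deg(v)$ is even for every $v\in V\setminus D$ (degrees taken in the graph under consideration). The co-even domination number $\gamma_{coe}(G)$ is the minimum cardinality of a co-even dominating set of $G$. *)

theory Defs
  imports Main
begin

definition simple_graph :: "'a set \<Rightarrow> 'a set set \<Rightarrow> bool" where
  "simple_graph V E \<longleftrightarrow> finite V \<and>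
     (\<forall>e\<in>E. \<exists>u v. e = {u, v} \<and> u \<noteq> v \<and> u \<in> V \<and> v \<in> V)"

definition neighbours :: "'a set \<Rightarrow> 'a set set \<Rightarrow> 'a \<Rightarrow> 'a set" where
  "neighbours V E v = {u \<in> V. {u, v} \<in> E}"

definition degree :: "'a set \<Rightarrow> 'a set set \<Rightarrow> 'a \<Rightarrow> nat" where
  "degree V E v = card (neighbours V E v)"

definition dominating_set :: "'a set \<Rightarrow> 'a set set \<Rightarrow> 'a set \<Rightarrow> bool" where
  "dominating_set V E D \<longleftrightarrow> D \<subseteq> V \<and>
     (\<forall>v \<in> V - D. \<exists>u \<in> D. {u, v} \<in> E)"

definition co_even_dominating_set :: "'a set \<Rightarrow> 'a set set \<Rightarrow> 'a set \<Rightarrow> bool" where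
  "co_even_dominating_set V E D \<longleftrightarrow> dominating_set V E D \<and>
     (\<forall>v \<in> V - D. even (degree V E v))"

text \<open>Minimum cardinality of a co-even dominating set (V itself always is one).\<close>
definition gamma_coe :: "'a set \<Rightarrow> 'a set set \<Rightarrow> nat" where
  "gamma_coe V E = Min (card ` {D. co_even_dominating_set V E D})"

end

theory Submission
  imports Defs
begin

lemma ced_fin:
  assumes "finite V"
  shows "finite (card ` {D. co_even_dominating_set V E D})"
proof -
  have "{D. co_even_dominating_set V E D} \<subseteq> Pow V"
    by (auto simp: co_even_dominating_set_def dominating_set_def)
  then show ?thesis using assms by (meson finite_Pow_iff finite_imageI finite_subset)
qed

lemma ced_V: "co_even_dominating_set V E V"
  by (auto simp: co_even_dominating_set_def dominating_set_def)

lemma gamma_le: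
  assumes "finite V" "co_even_dominating_set V E D"
  shows "gamma_coe V E \<le> card D"
  unfolding gamma_coe_def using assms ced_fin[OF assms(1)] by (intro Min_le) auto

lemma gamma_ex:
  assumes "finite V"
  shows "\<exists>D. co_even_dominating_set V E D \<and> card D = gamma_coe V E"
proof -
  have "gamma_coe V E \<in> card ` {D. co_even_dominating_set V E D}"
    unfolding gamma_coe_def using ced_fin[OF assms] ced_V[of V E] by (intro Min_in) auto
  then show ?thesis by auto
qed

lemma transfer_ced:
  assumes "E1 - {{u,v}} = E2 - {{u,v}}" "u \<in> V" "v \<in> V"
    and "co_even_dominating_set V E1 D"
  shows "co_even_dominating_set V E2 (D \<union> {u,v})"
proof -
  have key: "{w,x} \<in> E1 \<longleftrightarrow> {w,x} \<in> E2" if "x \<notin> {u,v}" for w x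
  proof -
    have "{w,x} \<noteq> {u,v}" using that by (auto simp: doubleton_eq_iff)
    then show ?thesis using assms(1) by blast
  qed
  have nb: "neighbours V E1 x = neighbours V E2 x" if "x \<notin> {u,v}" for x
    using key[OF that] by (auto simp: neighbours_def)
  show ?thesis
    using assms(2-4) unfolding co_even_dominating_set_def dominating_set_def degree_def
    apply (intro conjI)
      apply blast
    using key apply blast
    using nb by (metis DiffD1 DiffD2 DiffI UnI2 Un_iff)
qed

lemma gamma_step:
  assumes "finite V" "E1 - {{u,v}} = E2 - {{u,v}}" "u \<in> V" "v \<in> V"
  shows "gamma_coe V E2 \<le> gamma_coe V E1 + 2"
proof -
  obtain D where D: "co_even_dominating_set V E1 D" "card D = gamma_coe V E1"
    using gamma_ex[OF assms(1)] by blast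
  have "finite D" using D(1) assms(1)
    by (auto simp: co_even_dominating_set_def dominating_set_def intro: finite_subset)
  have "gamma_coe V E2 \<le> card (D \<union> {u,v})"
    by (rule gamma_le[OF assms(1) transfer_ced[OF assms(2-4) D(1)]])
  also have "\<dots> \<le> card D + card {u,v}" by (rule card_Un_le)
  also have "\<dots> \<le> card D + 2" by (simp add: card_insert_le_m1)
  finally show ?thesis using D(2) by simp
qed

theorem mainTheorem3:
  fixes V :: "'a set" and E :: "'a set set" and e :: "'a set"
  assumes "simple_graph V E"
    and "e \<in> E"
  shows "int (gamma_coe V E) - 2 \<le> int (gamma_coe V (E - {e}))
         \<and> int (gamma_coe V (E - {e})) \<le> int (gamma_coe V E) + 2"
proof -
  obtain u v where uv: "e = {u,v}" "u \<in> V" "v \<in> V" and fin: "finite V"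
    using assms unfolding simple_graph_def by blast
  have "gamma_coe V (E - {e}) \<le> gamma_coe V E + 2"
    using gamma_step[OF fin _ uv(2,3), of E "E - {e}"] uv(1) by auto
  moreover have "gamma_coe V E \<le> gamma_coe V (E - {e}) + 2"
    using gamma_step[OF fin _ uv(2,3), of "E - {e}" E] uv(1) by auto
  ultimately show ?thesis by linarith
qed

end
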